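(* Let $P,Q$ be nonzero coprime integers with $\Delta:=P^2-4Q\neq0$, such that $\alpha/\beta$ is not a root of unity, where $\alpha,\beta$ are the roots of $x^2-Px+Q$. Let $(U_n)$ be the Lucas sequence $U_n=(\alpha^n-\beta^n)/(\alpha-\beta)$. Then for all positive integers $n,k$ with $n\ge k$, \[\mathrm{lcm}\left\{\binom{n}{m}_{\boldsymbol U}:\ 1\le m\le k\right\}=\frac{\mathrm{lcm}(U_{n+1},U_n,\dots,U_{n-k+1})}{|U_{n+1}|}.\]
   Context: $U_0=0$, $U_1=1$, $U_{n+2}=PU_{n+1}-QU_n$. For $n\ge k\ge1$, $\binom{n}{k}_{\boldsymbol U}:=\frac{U_nU_{n-1}\cdots U_{n-k+1}}{U_1U_2\cdots U_k}$. *)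

theory Defs
  imports Complex_Main
begin

fun lucasU :: "int \<Rightarrow> int \<Rightarrow> nat \<Rightarrow> int" where
  "lucasU P Q 0 = 0"
| "lucasU P Q (Suc 0) = 1"
| "lucasU P Q (Suc (Suc n)) = P * lucasU P Q (Suc n) - Q * lucasU P Q n"

text \<open>Lucasnomial (n choose k)_U = U_n U_{n-1} ... U_{n-k+1} / (U_1 ... U_k).
  The quotient is an integer for the sequences considered; it is computed with
  integer division.\<close>
definition lucasnomial :: "int \<Rightarrow> int \<Rightarrow> nat \<Rightarrow> nat \<Rightarrow> int" where
  "lucasnomial P Q n k =
     (\<Prod>i\<in>{n-k+1..n}. lucasU P Q i) div (\<Prod>i\<in>{1..k}. lucasU P Q i)"

end

theory Submission
  imports Defs "HOL-Computational_Algebra.Primes"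
begin

lemma gcd_lin: "gcd (k * b + a) b = gcd a (b::int)"
  by (metis gcd.commute gcd_add_mult)

lemma U_add: "lucasU P Q (m + Suc n) = lucasU P Q (Suc m) * lucasU P Q (Suc n) - Q * lucasU P Q m * lucasU P Q n"
proof -
  have "lucasU P Q (m + Suc n) = lucasU P Q (Suc m) * lucasU P Q (Suc n) - Q * lucasU P Q m * lucasU P Q n
      \<and> lucasU P Q (m + Suc (Suc n)) = lucasU P Q (Suc m) * lucasU P Q (Suc (Suc n)) - Q * lucasU P Q m * lucasU P Q (Suc n)"
  proof (induction n)
    case 0
    then show ?case by (simp add: algebra_simps)
  next
    case (Suc n)
    define a where "a = lucasU P Q (m + Suc n)"
    define b where "b = lucasU P Q (m + Suc (Suc n))"
    define c where "c = lucasU P Q (m + Suc (Suc (Suc n)))"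
    have e1: "c = P * b - Q * a" unfolding a_def b_def c_def
      by (metis add_Suc_right lucasU.simps(3))
    have e2: "lucasU P Q (Suc (Suc (Suc n))) = P * lucasU P Q (Suc (Suc n)) - Q * lucasU P Q (Suc n)"
      by (rule lucasU.simps(3))
    have h1: "a = lucasU P Q (Suc m) * lucasU P Q (Suc n) - Q * lucasU P Q m * lucasU P Q n"
      using Suc.IH a_def by blast
    have h2: "b = lucasU P Q (Suc m) * lucasU P Q (Suc (Suc n)) - Q * lucasU P Q m * lucasU P Q (Suc n)"
      using Suc.IH b_def by blast
    have e3: "lucasU P Q (Suc (Suc n)) = P * lucasU P Q (Suc n) - Q * lucasU P Q n"
      by (rule lucasU.simps(3))
    have "c = lucasU P Q (Suc m) * lucasU P Q (Suc (Suc (Suc n))) - Q * lucasU P Q m * lucasU P Q (Suc (Suc n))"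
      unfolding e1 h1 h2 e2 e3 by (simp only: algebra_simps)
    then show ?case using h2 b_def c_def by simp
  qed
  then show ?thesis by blast
qed

lemma U_coprime_Q: "coprime P Q \<Longrightarrow> coprime (lucasU P Q (Suc n)) Q"
proof (induction n rule: nat_less_induct)
  case (1 n)
  show ?case
  proof (cases n)
    case 0 then show ?thesis by (simp add: One_nat_def)
  next
    case (Suc m)
    have "coprime (P * lucasU P Q (Suc m)) Q"
      using 1 Suc by auto
    moreover have "gcd (P * lucasU P Q (Suc m) - Q * lucasU P Q m) Q = gcd (P * lucasU P Q (Suc m)) Q"
      using gcd_lin[of "- lucasU P Q m" Q "P * lucasU P Q (Suc m)"] by (simp add: algebra_simps)
    ultimately show ?thesis using Suc by (simp add: coprime_iff_gcd_eq_1)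
  qed
qed

lemma U_coprime_Suc: "coprime P Q \<Longrightarrow> coprime (lucasU P Q (Suc n)) (lucasU P Q n)"
proof (induction n)
  case 0 then show ?case by simp
next
  case (Suc n)
  have "gcd (lucasU P Q (Suc (Suc n))) (lucasU P Q (Suc n)) = gcd (- Q * lucasU P Q n) (lucasU P Q (Suc n))"
    using gcd_lin[of P "lucasU P Q (Suc n)" "- Q * lucasU P Q n"] by (simp add: algebra_simps)
  also have "\<dots> = gcd (lucasU P Q n) (lucasU P Q (Suc n))"
    using U_coprime_Q[OF Suc.prems, of n]
    by (metis coprime_commute gcd_mult_left_left_cancel mult_minus_left gcd_neg1_int)
  finally show ?case using Suc by (simp add: coprime_iff_gcd_eq_1 gcd.commute)
qed

lemma U_gcd_add: "coprime P Q \<Longrightarrow> gcd (lucasU P Q (m + n)) (lucasU P Q n) = gcd (lucasU P Q m) (lucasU P Q n)"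
proof (cases n)
  case 0 then show ?thesis by simp
next
  case (Suc k)
  assume cop: "coprime P Q"
  have eq: "lucasU P Q (m + Suc k) = lucasU P Q (Suc m) * lucasU P Q (Suc k) + (- Q * lucasU P Q k * lucasU P Q m)"
    using U_add[of P Q m k] by (simp only: algebra_simps)
  have "gcd (lucasU P Q (m + n)) (lucasU P Q n) = gcd (- Q * lucasU P Q k * lucasU P Q m) (lucasU P Q (Suc k))"
    unfolding Suc eq by (rule gcd_lin)
  also have "\<dots> = gcd (lucasU P Q m) (lucasU P Q (Suc k))"
  proof -
    have "coprime (lucasU P Q (Suc k)) (- Q * lucasU P Q k)"
      using U_coprime_Q[OF cop, of k] U_coprime_Suc[OF cop, of k] by simp
    then show ?thesis by (rule gcd_mult_left_left_cancel)
  qed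
  finally show ?thesis using Suc by simp
qed

lemma U_gcd_mult: "coprime P Q \<Longrightarrow> gcd (lucasU P Q (r + q * n)) (lucasU P Q n) = gcd (lucasU P Q r) (lucasU P Q n)"
proof (induction q)
  case 0 then show ?case by simp
next
  case (Suc q)
  have e: "r + Suc q * n = (r + q * n) + n" by simp
  have "gcd (lucasU P Q ((r + q * n) + n)) (lucasU P Q n) = gcd (lucasU P Q (r + q * n)) (lucasU P Q n)"
    by (rule U_gcd_add[OF Suc.prems])
  also have "\<dots> = gcd (lucasU P Q r) (lucasU P Q n)" by (rule Suc.IH[OF Suc.prems])
  finally show ?case unfolding e .
qed

lemma U_gcd: "coprime P Q \<Longrightarrow> gcd (lucasU P Q m) (lucasU P Q n) = \<bar>lucasU P Q (gcd m n)\<bar>"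
proof (induction m n rule: gcd_nat_induct)
  case (step m n)
  have "gcd (lucasU P Q m) (lucasU P Q n) = gcd (lucasU P Q (m mod n)) (lucasU P Q n)"
    using U_gcd_mult[OF step.prems, of "m mod n" "m div n" n] by simp
  also have "\<dots> = \<bar>lucasU P Q (gcd n (m mod n))\<bar>"
    using step(2)[OF step(3)] by (simp only: gcd.commute)
  finally show ?case unfolding gcd_red_nat[of m n] .
qed simp

lemma U_binet:
  fixes a b :: complex
  assumes ab: "a + b = of_int P" "a * b = of_int Q"
  shows "of_int (lucasU P Q n) * (a - b) = a ^ n - b ^ n"
proof -
  have "of_int (lucasU P Q n) * (a - b) = a ^ n - b ^ n \<and>
        of_int (lucasU P Q (Suc n)) * (a - b) = a ^ Suc n - b ^ Suc n"
  proof (induction n)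
    case 0 then show ?case by simp
  next
    case (Suc n)
    have "of_int (lucasU P Q (Suc (Suc n))) * (a - b)
        = (a + b) * (of_int (lucasU P Q (Suc n)) * (a - b)) - (a * b) * (of_int (lucasU P Q n) * (a - b))"
      using ab by (simp add: algebra_simps)
    also have "\<dots> = (a + b) * (a ^ Suc n - b ^ Suc n) - (a * b) * (a ^ n - b ^ n)"
      using Suc.IH by simp
    also have "\<dots> = a ^ Suc (Suc n) - b ^ Suc (Suc n)"
      by (simp add: algebra_simps)
    finally show ?case using Suc.IH by simp
  qed
  then show ?thesis by blast
qed

lemma U_nonzero:
  assumes "Q \<noteq> 0" "P^2 - 4*Q \<noteq> 0"
    and H: "\<forall>a b :: complex. (\<forall>x. x^2 - of_int P * x + of_int Q = (x - a) * (x - b))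
            \<longrightarrow> (\<forall>m::nat. m > 0 \<longrightarrow> (a / b)^m \<noteq> 1)"
    and "n > 0"
  shows "lucasU P Q n \<noteq> 0"
proof
  assume U0: "lucasU P Q n = 0"
  define s where "s = csqrt (of_int (P^2 - 4*Q))"
  define a where "a = (of_int P + s) / 2"
  define b where "b = (of_int P - s) / 2"
  have s2: "s^2 = of_int (P^2 - 4*Q)" unfolding s_def by simp
  have sum: "a + b = of_int P" unfolding a_def b_def by (simp add: field_simps)
  have prod: "a * b = of_int Q"
  proof -
    have "a * b = (of_int P ^ 2 - s^2) / 4" unfolding a_def b_def by (simp add: field_simps power2_eq_square)
    also have "\<dots> = of_int Q" unfolding s2 by simp
    finally show ?thesis .
  qed
  have fac: "\<forall>x. x^2 - of_int P * x + of_int Q = (x - a) * (x - b)"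
  proof
    fix x :: complex
    have "(x - a) * (x - b) = x^2 - (a + b) * x + a * b" by (simp add: algebra_simps power2_eq_square)
    then show "x^2 - of_int P * x + of_int Q = (x - a) * (x - b)" using sum prod by simp
  qed
  have "s \<noteq> 0" using s2 assms(2) by (metis of_int_eq_0_iff zero_power2)
  then have amb: "a - b \<noteq> 0" unfolding a_def b_def by (simp add: field_simps)
  have "a ^ n - b ^ n = 0" using U_binet[OF sum prod, of n] U0 by simp
  then have "a ^ n = b ^ n" by simp
  moreover have "b \<noteq> 0" using prod assms(1) by auto
  ultimately have "(a / b) ^ n = 1" by (simp add: power_divide)
  then show False using H fac \<open>n > 0\<close> by blast
qed


lemma layer:
  fixes g :: "nat \<Rightarrow> nat"
  assumes H: "\<And>a b. 0 < a \<Longrightarrow> 0 < b \<Longrightarrow> g (gcd a b) = min (g a) (g b)"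
  shows "\<exists>d. \<forall>i>0. (t \<le> g i \<longleftrightarrow> d dvd i)"
proof (cases "\<exists>i>0. t \<le> g i")
  case True
  define d where "d = (LEAST i. 0 < i \<and> t \<le> g i)"
  have d: "0 < d \<and> t \<le> g d" unfolding d_def by (rule LeastI_ex) (use True in blast)
  have "\<forall>i>0. (t \<le> g i \<longleftrightarrow> d dvd i)"
  proof (intro allI impI iffI)
    fix i :: nat assume i: "0 < i" "t \<le> g i"
    have gp: "0 < gcd d i" using i by simp
    have "t \<le> g (gcd d i)" using H[of d i] d i by simp
    then have "0 < gcd d i \<and> t \<le> g (gcd d i)" using gp by simp
    then have "d \<le> gcd d i" unfolding d_def by (rule Least_le)
    moreover have "gcd d i \<le> d" using d by (simp add: gcd_le1_nat)
    ultimately have "gcd d i = d" by simp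
    then show "d dvd i" by (metis gcd_dvd2)
  next
    fix i :: nat assume i: "0 < i" "d dvd i"
    then have "gcd d i = d" by (simp add: gcd_nat.absorb1)
    then have "g d \<le> g i" using H[of d i] d i by simp
    then show "t \<le> g i" using d by simp
  qed
  then show ?thesis by blast
next
  case False
  have "\<forall>i>0. (t \<le> g i \<longleftrightarrow> (0::nat) dvd i)"
  proof (intro allI impI)
    fix i :: nat assume "0 < i"
    then have "\<not> t \<le> g i" using False by blast
    then show "(t \<le> g i \<longleftrightarrow> (0::nat) dvd i)" using \<open>0 < i\<close> by simp
  qed
  then show ?thesis by blast
qed

lemma sum_layers:
  fixes g :: "nat \<Rightarrow> nat"
  assumes "finite I" "\<forall>i\<in>I. g i \<le> G"
  shows "(\<Sum>i\<in>I. g i) = (\<Sum>t\<in>{1..G}. \<Sum>i\<in>I. of_bool (t \<le> g i))"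
proof -
  have "\<And>i. i \<in> I \<Longrightarrow> g i = (\<Sum>t\<in>{1..G}. of_bool (t \<le> g i))"
  proof -
    fix i assume "i \<in> I"
    then have "{1..G} \<inter> {t. t \<le> g i} = {1..g i}" using assms(2) by auto
    then show "g i = (\<Sum>t\<in>{1..G}. of_bool (t \<le> g i))" by simp
  qed
  then have "(\<Sum>i\<in>I. g i) = (\<Sum>i\<in>I. \<Sum>t\<in>{1..G}. of_bool (t \<le> g i))" by (rule sum.cong[OF refl])
  also have "\<dots> = (\<Sum>t\<in>{1..G}. \<Sum>i\<in>I. of_bool (t \<le> g i))" by (rule sum.swap)
  finally show ?thesis .
qed

lemma count_mult:
  fixes a b d :: nat
  assumes "a \<le> b"
  shows "(\<Sum>i\<in>{a<..b}. of_bool (d dvd i) :: nat) = b div d - a div d"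
  using assms
proof (induction b)
  case 0 then show ?case by simp
next
  case (Suc b)
  show ?case
  proof (cases "a = Suc b")
    case True then show ?thesis by simp
  next
    case False
    then have ab: "a \<le> b" using Suc.prems by simp
    have "{a<..Suc b} = insert (Suc b) {a<..b}" using ab by auto
    then have "(\<Sum>i\<in>{a<..Suc b}. of_bool (d dvd i) :: nat) = of_bool (d dvd Suc b) + (b div d - a div d)"
      using Suc.IH[OF ab] by simp
    moreover have "Suc b div d = b div d + of_bool (d dvd Suc b)"
      by (cases "d = 0") (auto simp: div_Suc dvd_eq_mod_eq_0)
    moreover have "a div d \<le> b div d" using ab by (simp add: div_le_mono)
    ultimately show ?thesis by simp
  qed
qed

lemma carry:
  fixes n m d :: nat
  assumes "m \<le> n"
  shows "int (n div d) - int ((n - m) div d) - int (m div d) = of_bool (n mod d < m mod d)"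
proof -
  define x where "x = n - m"
  have n: "n = x + m" using assms x_def by simp
  have "n div d = x div d + m div d + (x mod d + m mod d) div d"
    unfolding n by (rule div_add1_eq)
  moreover have "(x mod d + m mod d) div d = of_bool (n mod d < m mod d)"
  proof (cases "d = 0")
    case True then show ?thesis using n by simp
  next
    case False
    then have xd: "x mod d < d" and md: "m mod d < d" by auto
    moreover have "n mod d = (x mod d + m mod d) mod d" unfolding n by (simp add: mod_add_eq)
    ultimately show ?thesis
    proof (cases "x mod d + m mod d < d")
      case True
      then have "n mod d = x mod d + m mod d" using \<open>n mod d = _\<close> by simp
      then show ?thesis using True by simp
    next
      case False
      have lt: "x mod d + m mod d < 2 * d" using xd md by linarith
      have "(x mod d + m mod d) div d = 1"
        using False lt \<open>d \<noteq> 0\<close> by (simp add: le_div_geq div_less)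
      moreover have "(x mod d + m mod d) mod d = x mod d + m mod d - d"
        using False lt by (simp add: le_mod_geq)
      moreover have "n mod d < m mod d" using \<open>n mod d = _\<close> \<open>(x mod d + m mod d) mod d = _\<close> xd False by linarith
      ultimately show ?thesis by simp
    qed
  qed
  ultimately show ?thesis unfolding x_def by simp
qed

definition Dg :: "(nat \<Rightarrow> nat) \<Rightarrow> nat \<Rightarrow> nat \<Rightarrow> int" where
  "Dg g n m = int (\<Sum>i\<in>{n-m<..n}. g i) - int (\<Sum>i\<in>{0<..m}. g i)"

lemma D_formula:
  fixes g :: "nat \<Rightarrow> nat"
  assumes H: "\<And>a b. 0 < a \<Longrightarrow> 0 < b \<Longrightarrow> g (gcd a b) = min (g a) (g b)"
    and mn: "m \<le> n" and G: "\<forall>i\<in>{1..n}. g i \<le> G"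
  shows "Dg g n m = int (card {t\<in>{1..G}. n mod (SOME d. \<forall>i>0. (t \<le> g i \<longleftrightarrow> d dvd i))
                                       < m mod (SOME d. \<forall>i>0. (t \<le> g i \<longleftrightarrow> d dvd i))})"
proof -
  define dd where "dd t = (SOME d. \<forall>i>0. (t \<le> g i \<longleftrightarrow> d dvd i))" for t
  have dd: "\<forall>i>0. (t \<le> g i \<longleftrightarrow> dd t dvd i)" for t
    unfolding dd_def by (rule someI_ex) (rule layer[OF H])
  have cnt: "(\<Sum>i\<in>{a<..b}. of_bool (t \<le> g i) :: nat) = b div dd t - a div dd t" if "a \<le> b" for a b t
  proof -
    have "(\<Sum>i\<in>{a<..b}. of_bool (t \<le> g i) :: nat) = (\<Sum>i\<in>{a<..b}. of_bool (dd t dvd i))"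
      using dd[of t] by (intro sum.cong) auto
    also have "\<dots> = b div dd t - a div dd t" by (rule count_mult[OF that])
    finally show ?thesis .
  qed
  have s1: "(\<Sum>i\<in>{n-m<..n}. g i) = (\<Sum>t\<in>{1..G}. n div dd t - (n - m) div dd t)"
    using sum_layers[of "{n-m<..n}" g G] G cnt[of "n-m" n] by auto
  have s2: "(\<Sum>i\<in>{0<..m}. g i) = (\<Sum>t\<in>{1..G}. m div dd t - 0 div dd t)"
    using sum_layers[of "{0<..m}" g G] G mn cnt[of 0 m] by auto
  have "Dg g n m = (\<Sum>t\<in>{1..G}. int (n div dd t) - int ((n - m) div dd t) - int (m div dd t))"
    unfolding Dg_def s1 s2 by (simp add: of_nat_diff div_le_mono sum_subtractf)
  also have "\<dots> = (\<Sum>t\<in>{1..G}. of_bool (n mod dd t < m mod dd t))"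
    using carry[OF mn] by simp
  also have "\<dots> = int (card {t\<in>{1..G}. n mod dd t < m mod dd t})"
    by (simp add: Int_def)
  finally show ?thesis unfolding dd_def .
qed

lemma D_upper:
  fixes g :: "nat \<Rightarrow> nat"
  assumes H: "\<And>a b. 0 < a \<Longrightarrow> 0 < b \<Longrightarrow> g (gcd a b) = min (g a) (g b)"
    and m: "1 \<le> m" "m \<le> n"
  shows "\<exists>i\<in>{n-m<..Suc n}. int (g (Suc n)) + Dg g n m \<le> int (g i)"
proof -
  define dd where "dd t = (SOME d. \<forall>i>0. (t \<le> g i \<longleftrightarrow> d dvd i))" for t
  have dd: "\<forall>i>0. (t \<le> g i \<longleftrightarrow> dd t dvd i)" for t
    unfolding dd_def by (rule someI_ex) (rule layer[OF H])
  define G where "G = (\<Sum>i\<in>{..n}. g i)"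
  have G: "\<forall>i\<in>{1..n}. g i \<le> G" unfolding G_def by (auto intro: member_le_sum)
  define T where "T = {t\<in>{1..G}. n mod dd t < m mod dd t}"
  have D: "Dg g n m = int (card T)" unfolding T_def dd_def by (rule D_formula[OF H m(2) G])
  have finT: "finite T" unfolding T_def by simp
  have nz: "dd t \<noteq> 0" if "t \<in> T" for t
  proof
    assume "dd t = 0"
    then show False using that m unfolding T_def by simp
  qed
  show ?thesis
  proof (cases "T = {}")
    case True
    then show ?thesis using D m by (intro bexI[of _ "Suc n"]) auto
  next
    case False
    define t0 where "t0 = Max T"
    have t0T: "t0 \<in> T" unfolding t0_def using finT False by (rule Max_in)
    define d where "d = dd t0"
    have d0: "d \<noteq> 0" unfolding d_def using nz t0T by blast
    have nd: "n mod d < m mod d" using t0T unfolding T_def d_def by simp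
    define i where "i = n - n mod d"
    have di: "d dvd i" unfolding i_def by (simp add: minus_mod_eq_mult_div)
    have "m mod d \<le> m" by simp
    then have nm: "n mod d < m" using nd by linarith
    have ipos: "0 < i"
    proof (rule ccontr)
      assume "\<not> 0 < i"
      then have "n \<le> n mod d" unfolding i_def by simp
      then have "n mod d = n" using mod_less_eq_dividend[of n d] by linarith
      then show False using nd \<open>m mod d \<le> m\<close> m by linarith
    qed
    have irange: "i \<in> {n-m<..Suc n}" unfolding i_def using nm m by auto
    have t0i: "t0 \<le> g i" using dd[of t0] ipos di unfolding d_def by blast
    have sub: "T \<subseteq> {g (Suc n)<..g i}"
    proof
      fix t assume tT: "t \<in> T"
      have "t \<le> t0" unfolding t0_def using finT tT by (rule Max_ge)
      moreover have "g (Suc n) < t"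
      proof (rule ccontr)
        assume "\<not> g (Suc n) < t"
        then have "t \<le> g (Suc n)" by simp
        then have "dd t dvd Suc n" using dd[of t] zero_less_Suc by blast
        then have "Suc n mod dd t = 0" by simp
        then have "Suc (n mod dd t) = dd t" by (metis mod_Suc nat.distinct(1))
        moreover have "m mod dd t < dd t" using nz[OF tT] by simp
        moreover have "n mod dd t < m mod dd t" using tT unfolding T_def by simp
        ultimately show False by linarith
      qed
      ultimately show "t \<in> {g (Suc n)<..g i}" using t0i by simp
    qed
    have "card T \<le> card {g (Suc n)<..g i}" using sub by (intro card_mono) auto
    moreover have "g (Suc n) < g i" using sub t0T by fastforce
    ultimately have "int (g (Suc n)) + int (card T) \<le> int (g i)" by simp
    then show ?thesis using D irange by auto
  qed
qed

lemma D_lower: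
  fixes g :: "nat \<Rightarrow> nat"
  assumes H: "\<And>a b. 0 < a \<Longrightarrow> 0 < b \<Longrightarrow> g (gcd a b) = min (g a) (g b)"
    and i: "0 < i" "i \<le> n"
  shows "int (g i) \<le> int (g (Suc n)) + Dg g n (Suc n - i)"
proof -
  define m where "m = Suc n - i"
  have m: "1 \<le> m" "m \<le> n" using i unfolding m_def by auto
  define dd where "dd t = (SOME d. \<forall>i>0. (t \<le> g i \<longleftrightarrow> d dvd i))" for t
  have dd: "\<forall>i>0. (t \<le> g i \<longleftrightarrow> dd t dvd i)" for t
    unfolding dd_def by (rule someI_ex) (rule layer[OF H])
  define G where "G = (\<Sum>i\<in>{..n}. g i)"
  have G: "\<forall>i\<in>{1..n}. g i \<le> G" unfolding G_def by (auto intro: member_le_sum)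
  have giG: "g i \<le> G" using G i by auto
  define T where "T = {t\<in>{1..G}. n mod dd t < m mod dd t}"
  have D: "Dg g n m = int (card T)" unfolding T_def dd_def by (rule D_formula[OF H m(2) G])
  have finT: "finite T" unfolding T_def by simp
  have sub: "{g (Suc n)<..g i} \<subseteq> T"
  proof
    fix t assume t: "t \<in> {g (Suc n)<..g i}"
    define d where "d = dd t"
    have di: "d dvd i" using dd[of t] t i unfolding d_def by auto
    have "\<not> t \<le> g (Suc n)" using t by simp
    then have dn: "\<not> d dvd Suc n" using dd[of t] zero_less_Suc unfolding d_def by blast
    have d0: "d \<noteq> 0" using di i by auto
    have e1: "Suc n = i + m" using i unfolding m_def by simp
    have e2: "n = i + (m - 1)" using i m unfolding m_def by simp
    have dm: "\<not> d dvd m" using di dn e1 by (metis dvd_add_right_iff)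
    have "n mod d = (m - 1) mod d" using di e2 by (metis mod_add_self1 dvd_imp_mod_0 mod_add_left_eq add_0)
    moreover have "m mod d = Suc ((m - 1) mod d)"
    proof -
      have "m = Suc (m - 1)" using m by simp
      then have "m mod d = (if Suc ((m - 1) mod d) = d then 0 else Suc ((m - 1) mod d))"
        by (metis mod_Suc)
      then show ?thesis using dm by (auto simp: dvd_eq_mod_eq_0 split: if_splits)
    qed
    ultimately have "n mod d < m mod d" by simp
    then show "t \<in> T" unfolding T_def d_def using t giG by auto
  qed
  have "card {g (Suc n)<..g i} \<le> card T" using sub finT by (rule card_mono[rotated])
  then show ?thesis using D unfolding m_def by simp
qed

lemma Dg_nonneg:
  fixes g :: "nat \<Rightarrow> nat"
  assumes H: "\<And>a b. 0 < a \<Longrightarrow> 0 < b \<Longrightarrow> g (gcd a b) = min (g a) (g b)"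
    and mn: "m \<le> n"
  shows "0 \<le> Dg g n m"
proof -
  have G: "\<forall>i\<in>{1..n}. g i \<le> (\<Sum>i\<in>{..n}. g i)" by (auto intro: member_le_sum)
  show ?thesis using D_formula[OF H mn G] by simp
qed

lemma mult_prod:
  fixes p :: int
  assumes "prime p" "finite I" "\<forall>i\<in>I. lucasU P Q i \<noteq> 0"
  shows "multiplicity p (\<Prod>i\<in>I. lucasU P Q i) = (\<Sum>i\<in>I. multiplicity p (lucasU P Q i))"
  using assms by (intro prime_elem_multiplicity_prod_distrib) auto

theorem corollary4:
  fixes P Q :: int and n k :: nat
  assumes "P \<noteq> 0" and "Q \<noteq> 0" and "coprime P Q"
    and "P^2 - 4*Q \<noteq> 0"
    and "\<forall>a b :: complex. (\<forall>x. x^2 - of_int P * x + of_int Q = (x - a) * (x - b))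
            \<longrightarrow> (\<forall>m::nat. m > 0 \<longrightarrow> (a / b)^m \<noteq> 1)"
    and "1 \<le> k" and "k \<le> n"
  shows "Lcm ((\<lambda>m. lucasnomial P Q n m) ` {1..k})
         = Lcm (lucasU P Q ` {n-k+1..n+1}) div \<bar>lucasU P Q (n+1)\<bar>"
proof -
  define U where "U = lucasU P Q"
  have Unz: "U i \<noteq> 0" if "0 < i" for i
    unfolding U_def using U_nonzero[OF assms(2) assms(4) assms(5) that] .
  define g where "g p i = multiplicity p (U i)" for p :: int and i
  have H: "g p (gcd a b) = min (g p a) (g p b)" if "prime p" "0 < a" "0 < b" for p a b
  proof -
    have "g p (gcd a b) = multiplicity p \<bar>U (gcd a b)\<bar>"
      unfolding g_def by (metis multiplicity_normalize_right normalize_int_def)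
    also have "\<dots> = multiplicity p (gcd (U a) (U b))"
      unfolding U_def using U_gcd[OF assms(3)] by simp
    also have "\<dots> = min (g p a) (g p b)"
      unfolding g_def using Unz that by (intro multiplicity_gcd) auto
    finally show ?thesis .
  qed
  define A where "A m = (\<Prod>i\<in>{n-m<..n}. U i)" for m
  define B where "B m = (\<Prod>i\<in>{0<..m}. U i)" for m
  have Anz: "A m \<noteq> 0" for m unfolding A_def using Unz by auto
  have Bnz: "B m \<noteq> 0" for m unfolding B_def using Unz by auto
  have multAB: "int (multiplicity p (A m)) - int (multiplicity p (B m)) = Dg (g p) n m" if "prime p" for p m
    unfolding A_def B_def Dg_def g_def U_def
    using mult_prod[OF that, of "{n-m<..n}" P Q] mult_prod[OF that, of "{0<..m}" P Q] Unz[unfolded U_def]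
    by simp
  have BA: "B m dvd A m" if "m \<le> n" for m
  proof (rule multiplicity_le_imp_dvd[OF Bnz])
    fix p :: int assume p: "prime p"
    show "multiplicity p (B m) \<le> multiplicity p (A m)"
      using multAB[OF p, of m] Dg_nonneg[OF H[OF p] that] by simp
  qed
  define C where "C m = lucasnomial P Q n m" for m
  have Ceq: "A m = B m * C m" if "m \<le> n" for m
  proof -
    have "{n - m + 1..n} = {n-m<..n}" "{1..m} = {0<..m}" by auto
    then have "C m = A m div B m" unfolding C_def lucasnomial_def A_def B_def U_def by simp
    then show ?thesis using BA[OF that] by simp
  qed
  have Cnz: "C m \<noteq> 0" if "m \<le> n" for m using Ceq[OF that] Anz[of m] by auto
  have multC: "int (multiplicity p (C m)) = Dg (g p) n m" if "prime p" "m \<le> n" for p m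
  proof -
    have "multiplicity p (A m) = multiplicity p (B m) + multiplicity p (C m)"
      unfolding Ceq[OF that(2)] using that Bnz Cnz by (intro prime_elem_multiplicity_mult_distrib) auto
    then show ?thesis using multAB[OF that(1), of m] by simp
  qed
  define L where "L = Lcm (U ` {n-k+1..n+1})"
  have finL: "finite (U ` {n-k+1..n+1})" by simp
  have Lnz: "L \<noteq> 0"
  proof
    assume "L = 0"
    then have "0 \<in> U ` {n-k+1..n+1}" unfolding L_def using Lcm_0_iff[OF finL] by simp
    then obtain i where "i \<in> {n-k+1..n+1}" "U i = 0" by auto
    then show False using Unz[of i] by auto
  qed
  have UL: "U i dvd L" if "i \<in> {n-k+1..n+1}" for i
    unfolding L_def using that by (intro dvd_Lcm) auto
  have U1nz: "U (n+1) \<noteq> 0" using Unz by simp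
  have U1L: "\<bar>U (n+1)\<bar> dvd L" using UL[of "n+1"] assms(6) by simp
  define R where "R = L div \<bar>U (n+1)\<bar>"
  have LR: "L = \<bar>U (n+1)\<bar> * R" unfolding R_def using U1L by simp
  define LHS where "LHS = Lcm (C ` {1..k})"
  have part1: "LHS dvd R"
    unfolding LHS_def
  proof (rule Lcm_least)
    fix c assume "c \<in> C ` {1..k}"
    then obtain m where m: "m \<in> {1..k}" "c = C m" by auto
    have mn: "1 \<le> m" "m \<le> n" using m assms(7) by auto
    have "U (n+1) * C m dvd L"
    proof (rule multiplicity_le_imp_dvd)
      show "U (n+1) * C m \<noteq> 0" using U1nz Cnz[OF mn(2)] by simp
    next
      fix p :: int assume p: "prime p"
      obtain i where i: "i \<in> {n-m<..Suc n}" "int (g p (Suc n)) + Dg (g p) n m \<le> int (g p i)"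
        using D_upper[OF H[OF p] mn] by blast
      have irange: "i \<in> {n-k+1..n+1}" using i(1) m by auto
      have "multiplicity p (U (n+1) * C m) = g p (n+1) + multiplicity p (C m)"
        unfolding g_def using p U1nz Cnz[OF mn(2)] by (intro prime_elem_multiplicity_mult_distrib) auto
      also have "\<dots> \<le> g p i" using i(2) multC[OF p mn(2)] by simp
      also have "\<dots> \<le> multiplicity p L" unfolding g_def
        using UL[OF irange] Lnz by (rule dvd_imp_multiplicity_le)
      finally show "multiplicity p (U (n+1) * C m) \<le> multiplicity p L" .
    qed
    moreover have "\<bar>U (n+1)\<bar> * C m dvd U (n+1) * C m"
      by (intro mult_dvd_mono) auto
    ultimately have "\<bar>U (n+1)\<bar> * C m dvd \<bar>U (n+1)\<bar> * R" unfolding LR[symmetric]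
      by (meson dvd_trans)
    then show "c dvd R" using U1nz m(2) by simp
  qed
  have part2: "R dvd LHS"
  proof -
    have "L dvd \<bar>U (n+1)\<bar> * LHS"
      unfolding L_def
    proof (rule Lcm_least)
      fix u assume "u \<in> U ` {n-k+1..n+1}"
      then obtain i where i: "i \<in> {n-k+1..n+1}" "u = U i" by auto
      show "u dvd \<bar>U (n+1)\<bar> * LHS"
      proof (cases "i = n+1")
        case True then show ?thesis using i by simp
      next
        case False
        then have ip: "0 < i" "i \<le> n" using i assms(7) by auto
        define m where "m = Suc n - i"
        have m: "m \<in> {1..k}" "m \<le> n" using ip i(1) assms(7) unfolding m_def by auto
        have "U i dvd U (n+1) * C m"
        proof (rule multiplicity_le_imp_dvd)
          show "U i \<noteq> 0" using Unz ip by simp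
        next
          fix p :: int assume p: "prime p"
          have "multiplicity p (U (n+1) * C m) = g p (n+1) + multiplicity p (C m)"
            unfolding g_def using p U1nz Cnz[OF m(2)] by (intro prime_elem_multiplicity_mult_distrib) auto
          moreover have "int (g p i) \<le> int (g p (Suc n)) + Dg (g p) n m"
            unfolding m_def by (rule D_lower[OF H[OF p] ip])
          ultimately show "multiplicity p (U i) \<le> multiplicity p (U (n+1) * C m)"
            using multC[OF p m(2)] unfolding g_def by simp
        qed
        moreover have "C m dvd LHS" unfolding LHS_def using m by (intro dvd_Lcm) auto
        moreover have "U (n+1) * C m dvd \<bar>U (n+1)\<bar> * LHS"
          using \<open>C m dvd LHS\<close> by (intro mult_dvd_mono) auto
        ultimately show ?thesis using i(2) by (meson dvd_trans)
      qed
    qed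
    then have "\<bar>U (n+1)\<bar> * R dvd \<bar>U (n+1)\<bar> * LHS" unfolding LR[symmetric] .
    then show ?thesis using U1nz by simp
  qed
  have "0 \<le> LHS" unfolding LHS_def by simp
  moreover have "0 \<le> R"
  proof -
    have "0 \<le> L" unfolding L_def by simp
    moreover have "0 < \<bar>U (n+1)\<bar>" using U1nz by simp
    ultimately show ?thesis unfolding R_def by (simp add: pos_imp_zdiv_nonneg_iff)
  qed
  ultimately have "LHS = R" using part1 part2 by (rule zdvd_antisym_nonneg)
  then show ?thesis unfolding LHS_def R_def L_def C_def U_def .
qed

end
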